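(* For every countable $S\subseteq(0;1)$ there is a solid open set $A\subseteq2^\omega$, and also a solid closed set $A\subseteq 2^\omega$, such that $\operatorname{ran}\mathcal{D}_A=S\cup\{0,1\}$ and for every $r\in S$ there is exactly one $z\in2^\omega$ with $\mathcal{D}_A(z)=r$.
   Context: $2^{\omega}$ is the Cantor space; $N_s=\{x\in2^\omega:s\subset x\}$; $\mu$ is the coin-tossing measure, $\mu(N_s)=2^{-\mathrm{lh}(s)}$. For measurable $A$, $\mathcal{D}_A(z)=\lim_n\mu(A\cap N_{z\restriction n})/\mu(N_{z\restriction n})$ when the limit exists; $\operatorname{ran}\mathcal{D}_A$ is the set of values attained where defined. $A$ is solid if $\mathcal{D}_A(z)$ exists for every $z\in2^\omega$. *)

theory Defs
  imports "HOL-Analysis.Analysis" "HOL-Probability.Probability"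
begin

text \<open>Cantor space 2^omega is the type nat \<Rightarrow> bool, carrying the product topology
  (library instance for functions into the discrete space bool).\<close>

definition coin_measure :: "(nat \<Rightarrow> bool) measure" where
  "coin_measure = Pi\<^sub>M UNIV (\<lambda>_. measure_pmf (bernoulli_pmf (1/2)))"

definition cyl :: "(nat \<Rightarrow> bool) \<Rightarrow> nat \<Rightarrow> (nat \<Rightarrow> bool) set" where
  "cyl z n = {x. \<forall>i<n. x i = z i}"

definition density_at :: "(nat \<Rightarrow> bool) set \<Rightarrow> (nat \<Rightarrow> bool) \<Rightarrow> real \<Rightarrow> bool" where
  "density_at A z d \<longleftrightarrow>
     ((\<lambda>n. measure coin_measure (A \<inter> cyl z n) / measure coin_measure (cyl z n)) \<longlonglongrightarrow> d)"

definition solid :: "(nat \<Rightarrow> bool) set \<Rightarrow> bool" where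
  "solid A \<longleftrightarrow> (\<forall>z. \<exists>d. density_at A z d)"

definition density_range :: "(nat \<Rightarrow> bool) set \<Rightarrow> real set" where
  "density_range A = {d. \<exists>z. density_at A z d}"

end

theory Submission
  imports Defs
begin


lemma coin_prob: "prob_space coin_measure"
  unfolding coin_measure_def by (rule prob_space_PiM) (simp add: prob_space_measure_pmf)

interpretation coinP: prob_space coin_measure by (rule coin_prob)

lemma cyl_emb: "cyl z n = prod_emb UNIV (\<lambda>_. measure_pmf (bernoulli_pmf (1/2))) {..<n} (Pi\<^sub>E {..<n} (\<lambda>i. {z i}))"
proof (rule set_eqI)
  fix x :: "nat \<Rightarrow> bool"
  show "x \<in> cyl z n \<longleftrightarrow> x \<in> prod_emb UNIV (\<lambda>_. measure_pmf (bernoulli_pmf (1/2))) {..<n} (Pi\<^sub>E {..<n} (\<lambda>i. {z i}))"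
    unfolding prod_emb_iff cyl_def by (auto simp: restrict_PiE_iff Pi_iff)
qed

lemma cyl_sets[measurable]: "cyl z n \<in> sets coin_measure"
  unfolding coin_measure_def cyl_emb
  by (rule sets_PiM_I) auto

lemma cyl_measure: "measure coin_measure (cyl z n) = (1/2)^n"
proof -
  have "emeasure coin_measure (cyl z n) = (\<Prod>i\<in>{..<n}. emeasure (measure_pmf (bernoulli_pmf (1/2))) {z i})"
    unfolding coin_measure_def cyl_emb
    by (rule emeasure_PiM_emb) (auto simp: prob_space_measure_pmf)
  also have "\<dots> = (\<Prod>i\<in>{..<n}. ennreal (1/2))"
    by (intro prod.cong refl) (simp add: emeasure_pmf_single)
  also have "\<dots> = ennreal ((1/2)^n)" by (simp only: prod_constant card_lessThan ennreal_power)
  finally show ?thesis by (simp add: measure_def)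
qed

lemma cyl_open: "open (cyl z n)"
proof -
  have "open {f::nat\<Rightarrow>bool. \<forall>i\<in>{..<n}. f (id i) \<in> {z i}}"
    by (rule product_topology_basis') (auto intro!: discrete_topology_class.open_discrete)
  moreover have "{f::nat\<Rightarrow>bool. \<forall>i\<in>{..<n}. f (id i) \<in> {z i}} = cyl z n" by (auto simp: cyl_def)
  ultimately show ?thesis by simp
qed

lemma cyl_pos: "measure coin_measure (cyl z n) > 0" by (simp add: cyl_measure)

lemma density_in:
  assumes "A \<in> sets coin_measure" "cyl z m \<subseteq> A" shows "density_at A z 1"
  unfolding density_at_def
proof (rule tendsto_eventually, rule eventually_sequentiallyI)
  fix n assume "m \<le> n"
  then have "cyl z n \<subseteq> cyl z m" by (auto simp: cyl_def)
  then have "A \<inter> cyl z n = cyl z n" using assms by auto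
  then show "measure coin_measure (A \<inter> cyl z n) / measure coin_measure (cyl z n) = 1"
    using cyl_pos[of z n] by simp
qed

lemma density_out:
  assumes "cyl z m \<inter> A = {}" shows "density_at A z 0"
  unfolding density_at_def
proof (rule tendsto_eventually, rule eventually_sequentiallyI)
  fix n assume "m \<le> n"
  then have "cyl z n \<subseteq> cyl z m" by (auto simp: cyl_def)
  then have "A \<inter> cyl z n = {}" using assms by auto
  then show "measure coin_measure (A \<inter> cyl z n) / measure coin_measure (cyl z n) = 0"
    by simp
qed

lemma density_unique: "density_at A z d \<Longrightarrow> density_at A z d' \<Longrightarrow> d = d'"
  unfolding density_at_def using LIMSEQ_unique by blast

lemma rec_bound:
  fixes e :: "nat \<Rightarrow> real"
  assumes "\<And>n. 0 \<le> e n" "\<And>n. e n \<le> 1" "\<And>n. e n \<le> (1/2)^(n+1) + e (Suc n) / 2"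
  shows "e n \<le> (1/2)^n"
proof -
  have *: "\<forall>n. e n \<le> (1/2)^n + (1/2)^m" for m
  proof (induction m)
    case 0 then show ?case using assms(2) by (simp add: add_increasing)
  next
    case (Suc m)
    show ?case
    proof
      fix n
      have "e n \<le> (1/2)^(n+1) + e (Suc n) / 2" by (rule assms(3))
      also have "\<dots> \<le> (1/2)^(n+1) + ((1/2)^(Suc n) + (1/2)^m) / 2"
        using Suc.IH[rule_format, of "Suc n"] by (auto intro: divide_right_mono)
      also have "\<dots> \<le> (1/2)^n + (1/2)^(Suc m)" by (simp add: field_simps)
      finally show "e n \<le> (1/2)^n + (1/2)^(Suc m)" .
    qed
  qed
  show ?thesis
  proof (rule ccontr)
    assume "\<not> ?thesis"
    then have "0 < e n - (1/2)^n" by simp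
    then obtain m where "(1/2::real)^m < e n - (1/2)^n" using real_arch_pow_inv[of "e n - (1/2)^n" "1/2"] by auto
    with *[of m, rule_format, of n] show False by linarith
  qed
qed

lemma lim_from_bound:
  fixes f :: "nat \<Rightarrow> real"
  assumes "\<And>n. \<bar>f n - r\<bar> \<le> (1/2)^n" shows "f \<longlonglongrightarrow> r"
proof -
  have "(\<lambda>n. f n - r) \<longlonglongrightarrow> 0"
    by (rule Lim_null_comparison[where g="\<lambda>n. (1/2)^n"]) (use assms in \<open>auto intro: LIMSEQ_power_zero\<close>)
  then have "(\<lambda>n. (f n - r) + r) \<longlonglongrightarrow> 0 + r" by (intro tendsto_add) auto
  then show ?thesis by simp
qed



definition pat :: "nat \<Rightarrow> nat \<Rightarrow> nat \<Rightarrow> nat \<Rightarrow> bool" where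
  "pat k n j i = (i < k \<or> i = 2*k+2+n \<or> i = 2*k+3+n+j)"

definition NN :: "nat \<Rightarrow> nat \<Rightarrow> nat \<Rightarrow> (nat \<Rightarrow> bool) set" where
  "NN k n j = cyl (pat k n j) (2*k+4+n+j)"

lemma NN_mem: "y \<in> NN k n j \<longleftrightarrow> (\<forall>i<2*k+4+n+j. y i = (i < k \<or> i = 2*k+2+n \<or> i = 2*k+3+n+j))"
  by (simp add: NN_def cyl_def pat_def)

lemma NN_sets[measurable]: "NN k n j \<in> sets coin_measure" by (simp add: NN_def)
lemma NN_measure: "measure coin_measure (NN k n j) = (1/2)^(2*k+4+n+j)" by (simp add: NN_def cyl_measure)
lemma NN_open: "open (NN k n j)" by (simp add: NN_def cyl_open)

lemma K_lemma:
  assumes "\<forall>i<k. z i" "\<not> z k" "\<forall>i\<le>k. y i = z i" "y \<in> NN k' n j"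
  shows "k' = k"
proof (rule ccontr)
  assume "k' \<noteq> k"
  then consider "k' < k" | "k < k'" by linarith
  then show False
  proof cases
    case 1
    then have "y k' = False" using assms(4) unfolding NN_mem by (auto dest: spec[of _ k'])
    moreover have "y k' = z k'" using assms(3) 1 by auto
    ultimately show False using assms(1) 1 by auto
  next
    case 2
    then have "y k = True" using assms(4) unfolding NN_mem by (auto dest: spec[of _ k])
    moreover have "y k = z k" using assms(3) by auto
    ultimately show False using assms(2) by auto
  qed
qed

lemma n_lemma:
  assumes "y \<in> NN k n' j'" "\<forall>i. 2*k+2 \<le> i \<and> i < 2*k+2+n \<longrightarrow> \<not> y i" "y (2*k+2+n)"
  shows "n' = n"
proof (rule ccontr)
  assume "n' \<noteq> n"
  then consider "n' < n" | "n < n'" by linarith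
  then show False
  proof cases
    case 1
    then have "y (2*k+2+n')" using assms(1) unfolding NN_mem by (auto dest: spec[of _ "2*k+2+n'"])
    then show False using assms(2) 1 by auto
  next
    case 2
    then have "\<not> y (2*k+2+n)" using assms(1) unfolding NN_mem by (auto dest: spec[of _ "2*k+2+n"])
    then show False using assms(3) by auto
  qed
qed

lemma j_lemma:
  assumes "y \<in> NN k n j'" "\<forall>i. 2*k+3+n \<le> i \<and> i < 2*k+3+n+j \<longrightarrow> \<not> y i" "y (2*k+3+n+j)"
  shows "j' = j"
proof (rule ccontr)
  assume "j' \<noteq> j"
  then consider "j' < j" | "j < j'" by linarith
  then show False
  proof cases
    case 1
    then have "y (2*k+3+n+j')" using assms(1) unfolding NN_mem by (auto dest: spec[of _ "2*k+3+n+j'"])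
    then show False using assms(2) 1 by auto
  next
    case 2
    then have "\<not> y (2*k+3+n+j)" using assms(1) unfolding NN_mem by (auto dest: spec[of _ "2*k+3+n+j"])
    then show False using assms(3) by auto
  qed
qed

lemma NN_facts:
  assumes "y \<in> NN k n j"
  shows "\<forall>i<k. y i" "\<not> y k" "\<forall>i. k < i \<and> i < 2*k+2+n \<longrightarrow> \<not> y i" "y (2*k+2+n)"
    "\<forall>i. 2*k+3+n \<le> i \<and> i < 2*k+3+n+j \<longrightarrow> \<not> y i" "y (2*k+3+n+j)"
  using assms unfolding NN_mem by auto

lemma NN_disj: "j \<noteq> j' \<Longrightarrow> NN k n j \<inter> NN k n j' = {}"
  using j_lemma NN_facts(5,6) by blast

primrec qd :: "real \<Rightarrow> nat \<Rightarrow> real" where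
  "qd r 0 = 0"
| "qd r (Suc n) = (if qd r n + (1/2)^(Suc n) \<le> r then qd r n + (1/2)^(Suc n) else qd r n)"

definition dg :: "real \<Rightarrow> nat \<Rightarrow> bool" where
  "dg r n = (qd r n + (1/2)^(Suc n) \<le> r)"

lemma qd_sum: "qd r n = (\<Sum>j<n. if dg r j then (1/2)^(Suc j) else 0)"
  by (induction n) (auto simp: dg_def)

lemma qd_bound: assumes "0 \<le> r" "r < 1" shows "qd r n \<le> r \<and> r < qd r n + (1/2)^n"
  using assms
proof (induction n)
  case 0 then show ?case by simp
next
  case (Suc n)
  have h: "(1/2::real)^n = 2 * (1/2)^(Suc n)" by simp
  show ?case using Suc h by (auto simp del: power_Suc)
qed



definition Aset :: "real set \<Rightarrow> (nat \<Rightarrow> bool) set" where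
  "Aset S = cyl (\<lambda>i. i = 1) 2 \<union> (\<Union>r\<in>S. \<Union>n. \<Union>j\<in>{j. j<n \<and> dg r j}. NN (to_nat_on S r) n j)"

lemma cyl_mem: "y \<in> cyl z m \<longleftrightarrow> (\<forall>i<m. y i = z i)" by (simp add: cyl_def)

lemma P_mem: "y \<in> cyl (\<lambda>i. i = 1) 2 \<longleftrightarrow> \<not> y 0 \<and> y 1"
  by (auto simp: cyl_def numeral_2_eq_2 less_Suc_eq)

lemma Aset_mem: "y \<in> Aset S \<longleftrightarrow> (\<not> y 0 \<and> y 1) \<or> (\<exists>r\<in>S. \<exists>n j. j<n \<and> dg r j \<and> y \<in> NN (to_nat_on S r) n j)"
  unfolding Aset_def Un_iff P_mem by auto

lemma Aset_sets: assumes "countable S" shows "Aset S \<in> sets coin_measure"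
proof -
  have "(\<Union>j\<in>{j. j<n \<and> dg r j}. NN k n j) \<in> sets coin_measure" for k n r
    by (rule sets.finite_UN) auto
  then have "(\<Union>n. \<Union>j\<in>{j. j<n \<and> dg r j}. NN k n j) \<in> sets coin_measure" for k r
    by (intro sets.countable_UN) auto
  then have "(\<Union>r\<in>S. \<Union>n. \<Union>j\<in>{j. j<n \<and> dg r j}. NN (to_nat_on S r) n j) \<in> sets coin_measure"
    by (intro sets.countable_UN' assms) auto
  then show ?thesis unfolding Aset_def by (intro sets.Un cyl_sets)
qed

lemma Aset_open: "open (Aset S)"
  unfolding Aset_def by (intro open_Un open_UN ballI allI cyl_open NN_open)

lemma rec_alg:
  fixes p Y X q T1 T2 :: real
  assumes "p > 0" "Y = (p/2)*q + X" "T1 = Y/p" "T2 = X/(p/2)"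
  shows "T1 = q/2 + T2/2"
proof -
  have "T1 = ((p/2)*q)/p + X/p" using assms by (simp add: add_divide_distrib)
  also have "((p/2)*q)/p = q/2" using assms(1) by simp
  also have "X/p = T2/2" using assms by simp
  finally show ?thesis .
qed

lemma dens_zk:
  assumes S: "countable S" "S \<subseteq> {0<..<1}" and r: "r \<in> S"
  shows "density_at (Aset S) (\<lambda>i. i < to_nat_on S r) r"
proof -
  define k where "k = to_nat_on S r"
  define a where "a = 2*k+2"
  define z where "z = (\<lambda>i::nat. i < k)"
  define A where "A = Aset S"
  define D where "D n = cyl (\<lambda>i. i < k \<or> i = a+n) (Suc (a+n))" for n
  have r01: "0 < r" "r < 1" using S r by auto
  have Asets: "A \<in> sets coin_measure" unfolding A_def using Aset_sets S by auto
  have split1: "cyl z (a+n) = D n \<union> cyl z (Suc (a+n))" for n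
  proof (intro equalityI subsetI)
    fix y assume "y \<in> cyl z (a+n)"
    then have h: "\<forall>i<a+n. y i = (i<k)" unfolding cyl_mem z_def by auto
    show "y \<in> D n \<union> cyl z (Suc (a+n))"
    proof (cases "y (a+n)")
      case True
      then have "y \<in> D n" unfolding D_def cyl_mem using h by (auto simp: less_Suc_eq)
      then show ?thesis by auto
    next
      case False
      then have "y \<in> cyl z (Suc (a+n))" unfolding z_def cyl_mem using h by (auto simp: less_Suc_eq a_def)
      then show ?thesis by auto
    qed
  next
    fix y assume "y \<in> D n \<union> cyl z (Suc (a+n))"
    then show "y \<in> cyl z (a+n)" by (auto simp: D_def z_def cyl_mem)
  qed
  have split2: "D n \<inter> cyl z (Suc (a+n)) = {}" for n
  proof -
    have "\<not> (y \<in> D n \<and> y \<in> cyl z (Suc (a+n)))" for y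
    proof
      assume h: "y \<in> D n \<and> y \<in> cyl z (Suc (a+n))"
      then have "y (a+n)" by (auto simp: D_def cyl_mem)
      moreover have "\<not> y (a+n)" using h by (auto simp: z_def cyl_mem a_def)
      ultimately show False by auto
    qed
    then show ?thesis by blast
  qed
  note split = split1 split2
  have AD: "A \<inter> D n = (\<Union>j\<in>{j. j<n \<and> dg r j}. NN k n j)" for n
  proof (intro equalityI subsetI)
    fix y assume y: "y \<in> A \<inter> D n"
    then have yD: "\<forall>i<Suc (a+n). y i = (i < k \<or> i = a+n)" by (auto simp: D_def cyl_mem)
    from y have "(\<not> y 0 \<and> y 1) \<or> (\<exists>r\<in>S. \<exists>n j. j<n \<and> dg r j \<and> y \<in> NN (to_nat_on S r) n j)"
      using Aset_mem[of y S] unfolding A_def by blast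
    then show "y \<in> (\<Union>j\<in>{j. j<n \<and> dg r j}. NN k n j)"
    proof
      assume "\<not> y 0 \<and> y 1"
      moreover have "y 0 = (0 < k)" "y 1 = (1 < k)" using yD[rule_format, of 0] yD[rule_format, of 1]
        by (auto simp: a_def)
      ultimately show ?thesis by auto
    next
      assume "\<exists>r\<in>S. \<exists>n j. j<n \<and> dg r j \<and> y \<in> NN (to_nat_on S r) n j"
      then obtain r' n' j' where r': "r' \<in> S" "j' < n'" "dg r' j'" "y \<in> NN (to_nat_on S r') n' j'" by blast
      have "to_nat_on S r' = k"
        by (rule K_lemma[OF _ _ _ r'(4), where z=z]) (use yD in \<open>auto simp: z_def a_def\<close>)
      then have "r' = r" using inj_on_to_nat_on[OF S(1)] r r' unfolding k_def inj_on_def by auto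
      have "n' = n"
        by (rule n_lemma[of y k n' j' n]) (use r' \<open>r' = r\<close> yD k_def in \<open>auto simp: a_def\<close>)
      then show ?thesis using r' \<open>r' = r\<close> k_def by auto
    qed
  next
    fix y assume "y \<in> (\<Union>j\<in>{j. j<n \<and> dg r j}. NN k n j)"
    then obtain j where j: "j < n" "dg r j" "y \<in> NN k n j" by auto
    then have "y \<in> A" unfolding A_def Aset_mem k_def using r by blast
    moreover have "y \<in> D n" using j(3) unfolding NN_mem D_def cyl_mem by (auto simp: a_def)
    ultimately show "y \<in> A \<inter> D n" by auto
  qed
  have Hm: "measure coin_measure (\<Union>j\<in>{j. j<t \<and> dg r j}. NN k n j)
      = (\<Sum>j<t. if dg r j then (1/2)^(2*k+4+n+j) else 0)" for n t
  proof (induction t)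
    case 0 then show ?case by simp
  next
    case (Suc t)
    show ?case
    proof (cases "dg r t")
      case True
      then have e: "{j. j<Suc t \<and> dg r j} = insert t {j. j<t \<and> dg r j}" by auto
      have "measure coin_measure (\<Union>j\<in>{j. j<Suc t \<and> dg r j}. NN k n j)
         = measure coin_measure (NN k n t \<union> (\<Union>j\<in>{j. j<t \<and> dg r j}. NN k n j))"
        unfolding e by simp
      also have "\<dots> = measure coin_measure (NN k n t) + measure coin_measure (\<Union>j\<in>{j. j<t \<and> dg r j}. NN k n j)"
        by (rule coinP.finite_measure_Union) (auto intro!: sets.finite_UN dest: NN_disj[of _ _ k n, OF less_imp_neq])
      finally show ?thesis using Suc True by (simp add: NN_measure)
    next
      case False
      then have e: "{j. j<Suc t \<and> dg r j} = {j. j<t \<and> dg r j}" by (auto simp: less_Suc_eq)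
      show ?thesis unfolding e using Suc False by simp
    qed
  qed
  have mD: "measure coin_measure (A \<inter> D n) = (1/2)^(Suc (a+n)) * qd r n" for n
  proof -
    have "measure coin_measure (A \<inter> D n) = (\<Sum>j<n. if dg r j then (1/2)^(2*k+4+n+j) else 0)"
      unfolding AD Hm ..
    also have "\<dots> = (\<Sum>j<n. (1/2)^(Suc (a+n)) * (if dg r j then (1/2)^(Suc j) else 0))"
    proof (intro sum.cong refl)
      fix j
      have "2*k+4+n+j = Suc (a+n) + Suc j" by (simp add: a_def)
      then show "(if dg r j then (1/2::real)^(2*k+4+n+j) else 0) = (1/2)^(Suc (a+n)) * (if dg r j then (1/2)^(Suc j) else 0)"
        by (simp only: power_add) simp
    qed
    also have "\<dots> = (1/2)^(Suc (a+n)) * qd r n" by (simp add: qd_sum sum_distrib_left)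
    finally show ?thesis .
  qed
  define T where "T n = measure coin_measure (A \<inter> cyl z (n+a)) / measure coin_measure (cyl z (n+a))" for n
  have Tb: "0 \<le> T n \<and> T n \<le> 1" for n
  proof -
    have "measure coin_measure (A \<inter> cyl z (n+a)) \<le> measure coin_measure (cyl z (n+a))"
      by (rule coinP.finite_measure_mono) auto
    then show ?thesis unfolding T_def using cyl_pos[of z "n+a"] by auto
  qed
  have Trec: "T n = qd r n / 2 + T (Suc n) / 2" for n
  proof -
    have "A \<inter> cyl z (a+n) = (A \<inter> D n) \<union> (A \<inter> cyl z (Suc (a+n)))" using split(1)[of n] by auto
    moreover have "(A \<inter> D n) \<inter> (A \<inter> cyl z (Suc (a+n))) = {}" using split(2)[of n] by auto
    ultimately have "measure coin_measure (A \<inter> cyl z (a+n)) = measure coin_measure (A \<inter> D n) + measure coin_measure (A \<inter> cyl z (Suc (a+n)))"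
      using Asets by (auto intro!: coinP.finite_measure_Union simp: D_def)
    then have m: "measure coin_measure (A \<inter> cyl z (a+n)) = (1/2)^(Suc (a+n)) * qd r n + measure coin_measure (A \<inter> cyl z (Suc (a+n)))"
      using mD by simp
    define p :: real where "p = (1/2)^(a+n)"
    have p: "p > 0" "(1/2::real)^(Suc (a+n)) = p/2" unfolding p_def by auto
    have "T n = measure coin_measure (A \<inter> cyl z (a+n)) / p" unfolding T_def p_def cyl_measure by (simp add: add.commute)
    moreover have "T (Suc n) = measure coin_measure (A \<inter> cyl z (Suc (a+n))) / (p/2)"
      unfolding T_def cyl_measure p(2)[symmetric] by (simp add: add.commute)
    ultimately show ?thesis using m p by (intro rec_alg[of p]) auto
  qed
  define e where "e n = \<bar>T n - r\<bar>" for n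
  have "e n \<le> (1/2)^n" for n
  proof (rule rec_bound)
    fix n
    show "0 \<le> e n" unfolding e_def by simp
    show "e n \<le> 1" unfolding e_def using Tb[of n] r01 by auto
    have q: "\<bar>qd r n - r\<bar> \<le> (1/2)^n" using qd_bound[of r n] r01 by auto
    have "T n - r = (qd r n - r) / 2 + (T (Suc n) - r) / 2" using Trec[of n] by (simp add: field_simps)
    then have "e n \<le> \<bar>qd r n - r\<bar> / 2 + e (Suc n) / 2"
      unfolding e_def using abs_triangle_ineq[of "(qd r n - r)/2" "(T (Suc n) - r)/2"] by simp
    then show "e n \<le> (1/2)^(n+1) + e (Suc n) / 2" using q by simp
  qed
  then have "T \<longlonglongrightarrow> r" by (intro lim_from_bound) (simp add: e_def)
  then have "(\<lambda>m. measure coin_measure (A \<inter> cyl z m) / measure coin_measure (cyl z m)) \<longlonglongrightarrow> r"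
    unfolding T_def by (rule LIMSEQ_offset)
  then show ?thesis unfolding density_at_def A_def z_def k_def .
qed



lemma rec_alg2:
  fixes p Y X Fm c U1 U2 :: real
  assumes "p > 0" "Y = Fm + X" "Fm/p \<le> c" "U1 = Y/p" "U2 = X/(p/2)"
  shows "U1 \<le> c + U2/2"
proof -
  have "U1 = Fm/p + X/p" using assms by (simp add: add_divide_distrib)
  moreover have "U2/2 = X/p" using assms by simp
  ultimately show ?thesis using assms(3) by linarith
qed

lemma dens_w:
  assumes S: "countable S"
  shows "density_at (Aset S) (\<lambda>_. True) 0"
proof -
  define w where "w = (\<lambda>_::nat. True)"
  define A where "A = Aset S"
  define F where "F m = cyl (\<lambda>i. i < m) (Suc m)" for m
  have Asets: "A \<in> sets coin_measure" unfolding A_def using Aset_sets S by auto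
  have split1: "cyl w m = F m \<union> cyl w (Suc m)" for m
  proof (intro equalityI subsetI)
    fix y assume "y \<in> cyl w m"
    then have h: "\<forall>i<m. y i" unfolding cyl_mem w_def by auto
    show "y \<in> F m \<union> cyl w (Suc m)"
    proof (cases "y m")
      case False
      then have "y \<in> F m" unfolding F_def cyl_mem using h by (auto simp: less_Suc_eq)
      then show ?thesis by auto
    next
      case True
      then have "y \<in> cyl w (Suc m)" unfolding w_def cyl_mem using h by (auto simp: less_Suc_eq)
      then show ?thesis by auto
    qed
  next
    fix y assume "y \<in> F m \<union> cyl w (Suc m)"
    then show "y \<in> cyl w m" by (auto simp: F_def w_def cyl_mem)
  qed
  have split2: "F m \<inter> cyl w (Suc m) = {}" for m
  proof -
    have "\<not> (y \<in> F m \<and> y \<in> cyl w (Suc m))" for y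
      unfolding F_def w_def cyl_mem using lessI[of m] by auto
    then show ?thesis by blast
  qed
  note split = split1 split2
  have sub: "A \<inter> F m \<subseteq> cyl (\<lambda>i. i < m) (2*m+2)" if "m \<ge> 1" for m
  proof
    fix y assume y: "y \<in> A \<inter> F m"
    then have yF: "\<forall>i<Suc m. y i = (i < m)" by (auto simp: F_def cyl_mem)
    from y have "(\<not> y 0 \<and> y 1) \<or> (\<exists>r\<in>S. \<exists>n j. j<n \<and> dg r j \<and> y \<in> NN (to_nat_on S r) n j)"
      using Aset_mem[of y S] unfolding A_def by blast
    then show "y \<in> cyl (\<lambda>i. i < m) (2*m+2)"
    proof
      assume "\<not> y 0 \<and> y 1"
      then show ?thesis using yF[rule_format, of 0] that by auto
    next
      assume "\<exists>r\<in>S. \<exists>n j. j<n \<and> dg r j \<and> y \<in> NN (to_nat_on S r) n j"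
      then obtain r' n' j' where r': "y \<in> NN (to_nat_on S r') n' j'" by blast
      have "to_nat_on S r' = m"
        by (rule K_lemma[OF _ _ _ r', where z="\<lambda>i. i < m"]) (use yF in auto)
      then show ?thesis using r' unfolding NN_mem cyl_mem by auto
    qed
  qed
  define U where "U n = measure coin_measure (A \<inter> cyl w (n+1)) / measure coin_measure (cyl w (n+1))" for n
  have Ub: "0 \<le> U n \<and> U n \<le> 1" for n
  proof -
    have "measure coin_measure (A \<inter> cyl w (n+1)) \<le> measure coin_measure (cyl w (n+1))"
      by (rule coinP.finite_measure_mono) auto
    then show ?thesis unfolding U_def using cyl_pos[of w "n+1"] by auto
  qed
  have Urec: "U n \<le> (1/2)^(n+1) + U (Suc n) / 2" for n
  proof -
    let ?m = "Suc n"
    have "A \<inter> cyl w ?m = (A \<inter> F ?m) \<union> (A \<inter> cyl w (Suc ?m))" using split(1)[of ?m] by auto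
    moreover have "(A \<inter> F ?m) \<inter> (A \<inter> cyl w (Suc ?m)) = {}" using split(2)[of ?m] by auto
    ultimately have m: "measure coin_measure (A \<inter> cyl w ?m) = measure coin_measure (A \<inter> F ?m) + measure coin_measure (A \<inter> cyl w (Suc ?m))"
      using Asets by (auto intro!: coinP.finite_measure_Union simp: F_def)
    have "measure coin_measure (A \<inter> F ?m) \<le> measure coin_measure (cyl (\<lambda>i. i < ?m) (2*?m+2))"
      by (rule coinP.finite_measure_mono[OF sub]) auto
    then have b: "measure coin_measure (A \<inter> F ?m) \<le> (1/2)^(2*?m+2)" by (simp add: cyl_measure)
    define p :: real where "p = (1/2)^?m"
    have p: "p > 0" "(1/2::real)^(Suc ?m) = p/2" unfolding p_def by auto
    have e: "2*?m+2 = ?m + (?m+2)" by simp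
    have p3: "(1/2::real)^(2*?m+2) = p * (1/2)^(?m+2)" by (simp only: e power_add p_def)
    have p4: "(1/2::real)^(?m+2) \<le> (1/2)^(n+1)" by (rule power_decreasing) auto
    have u1: "U n = measure coin_measure (A \<inter> cyl w ?m) / p" unfolding U_def p_def cyl_measure by simp
    have u2: "U (Suc n) = measure coin_measure (A \<inter> cyl w (Suc ?m)) / (p/2)"
      unfolding U_def cyl_measure p(2)[symmetric] by simp
    have fb: "measure coin_measure (A \<inter> F ?m) / p \<le> (1/2)^(n+1)"
    proof -
      have b2: "measure coin_measure (A \<inter> F ?m) \<le> (1/2)^(?m+2) * p" using b unfolding p3 by (simp only: mult.commute)
      have "measure coin_measure (A \<inter> F ?m) / p \<le> (1/2)^(?m+2)" using b2 pos_divide_le_eq[OF p(1)] by blast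
      then show ?thesis using p4 by linarith
    qed
    show ?thesis by (rule rec_alg2[OF p(1) m fb u1 u2])
  qed
  have "U n \<le> (1/2)^n" for n
    by (rule rec_bound) (use Ub Urec in auto)
  then have "U \<longlonglongrightarrow> 0" by (intro lim_from_bound) (use Ub in auto)
  then have "(\<lambda>m. measure coin_measure (A \<inter> cyl w m) / measure coin_measure (cyl w m)) \<longlonglongrightarrow> 0"
    unfolding U_def by (rule LIMSEQ_offset)
  then show ?thesis unfolding density_at_def A_def w_def .
qed



lemma classify:
  assumes S: "countable S" "S \<subseteq> {0<..<1}"
  shows "density_at (Aset S) z 1 \<or> density_at (Aset S) z 0 \<or> (\<exists>r\<in>S. z = (\<lambda>i. i < to_nat_on S r))"
proof (cases "\<forall>i. z i")
  case True
  then have "z = (\<lambda>_. True)" by auto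
  then show ?thesis using dens_w[OF S(1)] by auto
next
  case False
  define A where "A = Aset S"
  have Asets: "A \<in> sets coin_measure" unfolding A_def using Aset_sets S by auto
  define k where "k = (LEAST i. \<not> z i)"
  have k1: "\<forall>i<k. z i" unfolding k_def using not_less_Least by blast
  have k2: "\<not> z k" unfolding k_def using False by (metis LeastI_ex)
  have inj: "inj_on (to_nat_on S) S" using S(1) by auto
  show ?thesis
  proof (cases "k = 0 \<and> z 1")
    case True
    have "cyl z 2 \<subseteq> A"
    proof
      fix y assume "y \<in> cyl z 2"
      then have "y 0 = z 0" "y 1 = z 1" unfolding cyl_mem by auto
      then show "y \<in> A" unfolding A_def Aset_mem using True k2 by auto
    qed
    then show ?thesis using density_in[OF Asets] A_def by blast
  next
    case notP: False
    show ?thesis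
    proof (cases "\<exists>i. k < i \<and> i \<le> 2*k+1 \<and> z i")
      case True
      then obtain i where i: "k < i" "i \<le> 2*k+1" "z i" by auto
      have "cyl z (2*k+2) \<inter> A = {}"
      proof (rule ccontr)
        assume "cyl z (2*k+2) \<inter> A \<noteq> {}"
        then obtain y where y: "y \<in> cyl z (2*k+2)" "y \<in> A" by auto
        then have ag: "\<forall>i<2*k+2. y i = z i" unfolding cyl_mem by auto
        from y(2) have "(\<not> y 0 \<and> y 1) \<or> (\<exists>r\<in>S. \<exists>n j. j<n \<and> dg r j \<and> y \<in> NN (to_nat_on S r) n j)"
          unfolding A_def Aset_mem by auto
        then show False
        proof
          assume P: "\<not> y 0 \<and> y 1"
          have "y 0 = z 0" "y 1 = z 1" using ag by auto
          then show False using P notP k1 by (cases "k = 0") auto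
        next
          assume "\<exists>r\<in>S. \<exists>n j. j<n \<and> dg r j \<and> y \<in> NN (to_nat_on S r) n j"
          then obtain r' n' j' where r': "y \<in> NN (to_nat_on S r') n' j'" by blast
          have kk: "to_nat_on S r' = k"
            by (rule K_lemma[OF k1 k2 _ r']) (use ag in auto)
          have "\<not> y i" using NN_facts(3)[OF r'[unfolded kk]] i by auto
          moreover have "y i = z i" using ag i by auto
          ultimately show False using i by auto
        qed
      qed
      then show ?thesis using density_out A_def by blast
    next
      case C: False
      then have C: "\<forall>i. k < i \<and> i \<le> 2*k+1 \<longrightarrow> \<not> z i" by auto
      have Pno: "\<not> (\<not> y 0 \<and> y 1)" if "y 0 = z 0" "y 1 = z 1" for y
        using that C k1 by (cases "k = 0") auto
      show ?thesis
      proof (cases "k \<in> to_nat_on S ` S")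
        case False
        have "cyl z (2*k+2) \<inter> A = {}"
        proof (rule ccontr)
          assume "cyl z (2*k+2) \<inter> A \<noteq> {}"
          then obtain y where y: "y \<in> cyl z (2*k+2)" "y \<in> A" by auto
          then have ag: "\<forall>i<2*k+2. y i = z i" unfolding cyl_mem by auto
          from y(2) have "(\<not> y 0 \<and> y 1) \<or> (\<exists>r\<in>S. \<exists>n j. j<n \<and> dg r j \<and> y \<in> NN (to_nat_on S r) n j)"
            unfolding A_def Aset_mem by auto
          then show False
          proof
            assume P: "\<not> y 0 \<and> y 1"
            have "y 0 = z 0" "y 1 = z 1" using ag by auto
            then show False using P Pno by blast
          next
            assume "\<exists>r\<in>S. \<exists>n j. j<n \<and> dg r j \<and> y \<in> NN (to_nat_on S r) n j"
            then obtain r' n' j' where r': "r' \<in> S" "y \<in> NN (to_nat_on S r') n' j'" by blast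
            have kk: "to_nat_on S r' = k"
              by (rule K_lemma[OF k1 k2 _ r'(2)]) (use ag in auto)
            then show False using False r'(1) by auto
          qed
        qed
        then show ?thesis using density_out A_def by blast
      next
        case True
        then obtain r where r: "r \<in> S" "to_nat_on S r = k" by auto
        show ?thesis
        proof (cases "\<forall>i\<ge>2*k+2. \<not> z i")
          case True
          have "z = (\<lambda>i. i < k)"
          proof
            fix i
            show "z i = (i < k)"
              using k1 k2 C True by (cases "i < k"; cases "i = k"; cases "i \<le> 2*k+1") auto
          qed
          then show ?thesis using r by auto
        next
          case False
          then have ex: "\<exists>n. z (2*k+2+n)" by (metis le_Suc_ex)
          define n where "n = (LEAST n. z (2*k+2+n))"
          have n1: "z (2*k+2+n)" unfolding n_def using ex by (metis LeastI_ex)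
          have n2: "\<forall>i. 2*k+2 \<le> i \<and> i < 2*k+2+n \<longrightarrow> \<not> z i"
          proof (intro allI impI)
            fix i assume i: "2*k+2 \<le> i \<and> i < 2*k+2+n"
            then obtain t where t: "i = 2*k+2+t" "t < n" by (metis add_less_cancel_left le_Suc_ex)
            then show "\<not> z i" using not_less_Least[of t "\<lambda>n. z (2*k+2+n)"] n_def by auto
          qed
          show ?thesis
          proof (cases "\<exists>j<n. z (2*k+3+n+j)")
            case True
            define j where "j = (LEAST j. z (2*k+3+n+j))"
            have j1: "z (2*k+3+n+j)" unfolding j_def using True by (metis LeastI_ex)
            have jn: "j < n" unfolding j_def using True by (meson Least_le le_less_trans)
            have j2: "\<forall>i. 2*k+3+n \<le> i \<and> i < 2*k+3+n+j \<longrightarrow> \<not> z i"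
            proof (intro allI impI)
              fix i assume i: "2*k+3+n \<le> i \<and> i < 2*k+3+n+j"
              then obtain t where t: "i = 2*k+3+n+t" "t < j" by (metis add_less_cancel_left le_Suc_ex)
              then show "\<not> z i" using not_less_Least[of t "\<lambda>j. z (2*k+3+n+j)"] j_def by auto
            qed
            have zpat: "z i = (i < k \<or> i = 2*k+2+n \<or> i = 2*k+3+n+j)" if "i < 2*k+4+n+j" for i
            proof -
              have "i < k \<or> i = k \<or> (k < i \<and> i \<le> 2*k+1) \<or> (2*k+2 \<le> i \<and> i < 2*k+2+n)
                \<or> i = 2*k+2+n \<or> (2*k+3+n \<le> i \<and> i < 2*k+3+n+j) \<or> i = 2*k+3+n+j"
                using that by presburger
              then consider "i < k" | "i = k" | "k < i \<and> i \<le> 2*k+1" | "2*k+2 \<le> i \<and> i < 2*k+2+n"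
                | "i = 2*k+2+n" | "2*k+3+n \<le> i \<and> i < 2*k+3+n+j" | "i = 2*k+3+n+j"
                by blast
              then show ?thesis
              proof cases
                case 1 then show ?thesis using k1 by auto
              next
                case 2 then show ?thesis using k2 by auto
              next
                case 3 then show ?thesis using C by auto
              next
                case 4 then show ?thesis using n2 by auto
              next
                case 5 then show ?thesis using n1 by auto
              next
                case 6 then show ?thesis using j2 by auto
              next
                case 7 then show ?thesis using j1 by auto
              qed
            qed
            have cz: "cyl z (2*k+4+n+j) = NN k n j"
              unfolding NN_mem cyl_mem set_eq_iff using zpat by auto
            show ?thesis
            proof (cases "dg r j")
              case True
              have "cyl z (2*k+4+n+j) \<subseteq> A"
              proof
                fix y assume "y \<in> cyl z (2*k+4+n+j)"
                then have "y \<in> NN k n j" using cz by simp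
                then show "y \<in> A" unfolding A_def Aset_mem using True r jn by blast
              qed
              then show ?thesis using density_in[OF Asets] A_def by blast
            next
              case False
              have "cyl z (2*k+4+n+j) \<inter> A = {}"
              proof (rule ccontr)
                assume "cyl z (2*k+4+n+j) \<inter> A \<noteq> {}"
                then obtain y where y: "y \<in> cyl z (2*k+4+n+j)" "y \<in> A" by auto
                then have ag: "\<forall>i<2*k+4+n+j. y i = z i" unfolding cyl_mem by auto
                have yN: "y \<in> NN k n j" using y(1) cz by auto
                from y(2) have "(\<not> y 0 \<and> y 1) \<or> (\<exists>r\<in>S. \<exists>n j. j<n \<and> dg r j \<and> y \<in> NN (to_nat_on S r) n j)"
                  unfolding A_def Aset_mem by auto
                then show False
                proof
                  assume P: "\<not> y 0 \<and> y 1"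
                  have "y 0 = z 0" "y 1 = z 1" using ag by auto
                  then show False using P Pno by blast
                next
                  assume "\<exists>r\<in>S. \<exists>n j. j<n \<and> dg r j \<and> y \<in> NN (to_nat_on S r) n j"
                  then obtain r' n' j' where r': "r' \<in> S" "j' < n'" "dg r' j'" "y \<in> NN (to_nat_on S r') n' j'" by blast
                  have kk: "to_nat_on S r' = k"
                    by (rule K_lemma[OF k1 k2 _ r'(4)]) (use ag in auto)
                  then have rr: "r' = r" using inj r r'(1) unfolding inj_on_def by auto
                  have nn: "n' = n"
                    by (rule n_lemma[OF r'(4)[unfolded kk]]) (use NN_facts(3,4)[OF yN] in auto)
                  have jj: "j' = j"
                    by (rule j_lemma[OF r'(4)[unfolded kk nn]]) (use NN_facts(5,6)[OF yN] in auto)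
                  show False using r'(3) rr jj False by simp
                qed
              qed
              then show ?thesis using density_out A_def by blast
            qed
          next
            case False
            have "cyl z (2*k+3+2*n) \<inter> A = {}"
            proof (rule ccontr)
              assume "cyl z (2*k+3+2*n) \<inter> A \<noteq> {}"
              then obtain y where y: "y \<in> cyl z (2*k+3+2*n)" "y \<in> A" by auto
              then have ag: "\<forall>i<2*k+3+2*n. y i = z i" unfolding cyl_mem by auto
              from y(2) have "(\<not> y 0 \<and> y 1) \<or> (\<exists>r\<in>S. \<exists>n j. j<n \<and> dg r j \<and> y \<in> NN (to_nat_on S r) n j)"
                unfolding A_def Aset_mem by auto
              then show False
              proof
                assume P: "\<not> y 0 \<and> y 1"
                have "y 0 = z 0" "y 1 = z 1" using ag by auto
                then show False using P Pno by blast
              next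
                assume "\<exists>r\<in>S. \<exists>n j. j<n \<and> dg r j \<and> y \<in> NN (to_nat_on S r) n j"
                then obtain r' n' j' where r': "r' \<in> S" "j' < n'" "dg r' j'" "y \<in> NN (to_nat_on S r') n' j'" by blast
                have kk: "to_nat_on S r' = k"
                  by (rule K_lemma[OF k1 k2 _ r'(4)]) (use ag in auto)
                have nn: "n' = n"
                  by (rule n_lemma[OF r'(4)[unfolded kk]]) (use ag n1 n2 in auto)
                have "y (2*k+3+n+j')" using NN_facts(6)[OF r'(4)[unfolded kk nn]] .
                moreover have "y (2*k+3+n+j') = z (2*k+3+n+j')" using ag r'(2) nn by auto
                ultimately show False using False r'(2) nn by auto
              qed
            qed
            then show ?thesis using density_out A_def by blast
          qed
        qed
      qed
    qed
  qed
qed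



lemma main_open:
  assumes S: "countable S" "S \<subseteq> {0<..<1}"
  shows "\<exists>A. open A \<and> A \<in> sets coin_measure \<and> solid A \<and> density_range A = S \<union> {0, 1} \<and>
            (\<forall>r\<in>S. \<exists>!z. density_at A z r)"
proof (intro exI conjI)
  let ?A = "Aset S"
  show "open ?A" by (rule Aset_open)
  show Asets: "?A \<in> sets coin_measure" by (rule Aset_sets[OF S(1)])
  have dens: "\<exists>d. density_at ?A z d \<and> d \<in> S \<union> {0,1}" for z
    using classify[OF S, of z] dens_zk[OF S] by blast
  have vals: "d \<in> S \<union> {0,1}" if "density_at ?A z d" for z d
    using dens[of z] density_unique that by blast
  show "solid ?A" unfolding solid_def using dens by blast
  have one: "density_at ?A (\<lambda>i. i = 1) 1"
    by (rule density_in[OF Asets, of _ 2]) (auto simp: Aset_def)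
  show "density_range ?A = S \<union> {0, 1}"
  proof
    show "density_range ?A \<subseteq> S \<union> {0, 1}" unfolding density_range_def using vals by blast
    show "S \<union> {0, 1} \<subseteq> density_range ?A"
      unfolding density_range_def using one dens_w[OF S(1)] dens_zk[OF S] by blast
  qed
  show "\<forall>r\<in>S. \<exists>!z. density_at ?A z r"
  proof
    fix r assume r: "r \<in> S"
    then have r01: "0 < r" "r < 1" using S by auto
    show "\<exists>!z. density_at ?A z r"
    proof (rule ex1I[of _ "\<lambda>i. i < to_nat_on S r"])
      show "density_at ?A (\<lambda>i. i < to_nat_on S r) r" by (rule dens_zk[OF S r])
    next
      fix z assume z: "density_at ?A z r"
      from classify[OF S, of z] show "z = (\<lambda>i. i < to_nat_on S r)"
      proof (elim disjE)
        assume "density_at ?A z 1" then show ?thesis using z density_unique r01 by fastforce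
      next
        assume "density_at ?A z 0" then show ?thesis using z density_unique r01 by fastforce
      next
        assume "\<exists>r'\<in>S. z = (\<lambda>i. i < to_nat_on S r')"
        then obtain r' where r': "r' \<in> S" "z = (\<lambda>i. i < to_nat_on S r')" by blast
        then have "r' = r" using dens_zk[OF S r'(1)] z density_unique by metis
        then show ?thesis using r' by simp
      qed
    qed
  qed
qed

lemma density_compl:
  assumes "A \<in> sets coin_measure"
  shows "density_at (- A) z d \<longleftrightarrow> density_at A z (1 - d)"
proof -
  let ?f = "\<lambda>n. measure coin_measure (A \<inter> cyl z n) / measure coin_measure (cyl z n)"
  let ?g = "\<lambda>n. measure coin_measure (- A \<inter> cyl z n) / measure coin_measure (cyl z n)"
  have g: "?g n = 1 - ?f n" for n
  proof -
    have "- A \<inter> cyl z n = cyl z n - A" by auto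
    then have "measure coin_measure (- A \<inter> cyl z n) = measure coin_measure (cyl z n) - measure coin_measure (cyl z n \<inter> A)"
      using coinP.finite_measure_Diff'[of "cyl z n" A] assms by simp
    then show ?thesis using cyl_pos[of z n] by (simp add: Int_commute diff_divide_distrib)
  qed
  show ?thesis
  proof
    assume "density_at (- A) z d"
    then have "?g \<longlonglongrightarrow> d" unfolding density_at_def .
    then have "(\<lambda>n. 1 - ?g n) \<longlonglongrightarrow> 1 - d" by (intro tendsto_diff) auto
    then show "density_at A z (1 - d)" unfolding density_at_def g by simp
  next
    assume "density_at A z (1 - d)"
    then have "?f \<longlonglongrightarrow> 1 - d" unfolding density_at_def .
    then have "(\<lambda>n. 1 - ?f n) \<longlonglongrightarrow> 1 - (1 - d)" by (intro tendsto_diff) auto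
    then show "density_at (- A) z d" unfolding density_at_def g by simp
  qed
qed

theorem theorem3p11:
  fixes S :: "real set"
  assumes "countable S" and "S \<subseteq> {0<..<1}"
  shows "(\<exists>A :: (nat \<Rightarrow> bool) set. open A \<and> solid A \<and>
            density_range A = S \<union> {0, 1} \<and>
            (\<forall>r\<in>S. \<exists>!z. density_at A z r))
       \<and> (\<exists>A :: (nat \<Rightarrow> bool) set. closed A \<and> solid A \<and>
            density_range A = S \<union> {0, 1} \<and>
            (\<forall>r\<in>S. \<exists>!z. density_at A z r))"
proof
  show "\<exists>A :: (nat \<Rightarrow> bool) set. open A \<and> solid A \<and> density_range A = S \<union> {0, 1} \<and> (\<forall>r\<in>S. \<exists>!z. density_at A z r)"
    using main_open[OF assms] by blast
next
  let ?S' = "(\<lambda>r. 1 - r) ` S"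
  have S': "countable ?S'" "?S' \<subseteq> {0<..<1}" using assms by auto
  obtain A where A: "open A" "A \<in> sets coin_measure" "solid A" "density_range A = ?S' \<union> {0, 1}"
    "\<forall>r\<in>?S'. \<exists>!z. density_at A z r"
    using main_open[OF S'] by blast
  have dc: "density_at (- A) z d \<longleftrightarrow> density_at A z (1 - d)" for z d by (rule density_compl[OF A(2)])
  show "\<exists>A :: (nat \<Rightarrow> bool) set. closed A \<and> solid A \<and> density_range A = S \<union> {0, 1} \<and> (\<forall>r\<in>S. \<exists>!z. density_at A z r)"
  proof (intro exI conjI)
    show "closed (- A)" using A(1) by (simp add: closed_Compl)
    show "solid (- A)" unfolding solid_def
    proof
      fix z
      obtain d0 where "density_at A z d0" using A(3) unfolding solid_def by blast
      then have "density_at (- A) z (1 - d0)" unfolding dc by simp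
      then show "\<exists>d. density_at (- A) z d" by blast
    qed
    have "d \<in> density_range (- A) \<longleftrightarrow> 1 - d \<in> density_range A" for d
      unfolding density_range_def dc by simp
    also have "1 - d \<in> density_range A \<longleftrightarrow> d \<in> S \<union> {0, 1}" for d
      unfolding A(4) by (auto simp: image_iff)
    finally show "density_range (- A) = S \<union> {0, 1}" by blast
    show "\<forall>r\<in>S. \<exists>!z. density_at (- A) z r"
      unfolding dc using A(5) by auto
  qed
qed

end
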